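(* Consider the multi-flow status-update queueing system described in the context with a single server ($M=1$), packet service times exponentially distributed and i.i.d. across time, and packet generation and arrival times synchronized across the $N$ flows. Let $P_1$ be a policy following the preemptive MAF-LGFS discipline and $\pi_1$ a work-conserving causal policy, both operating on the same packet generation/arrival times. Suppose that on a sample path a packet is delivered in $P_1$ and a packet is delivered in $\pi_1$ at the same time $t$. Let $\bm\Delta_{P_1}$ and $\bm\Delta'_{P_1}$ be the age vectors of $P_1$ just before and just after this delivery, and $\bm\Delta_{\pi_1}$, $\bm\Delta'_{\pi_1}$ those of $\pi_1$. If $\Delta_{[i],P_1}\le\Delta_{[i],\pi_1}$ for all $i=1,\ldots,N$, then $\Delta'_{[i],P_1}\le\Delta'_{[i],\pi_1}$ for all $i=1,\ldots,N$.
   Context: System: $N$ flows of update packets are sent through a queue with an infinite buffer and $M$ servers; each server processes one packet at a time. The $i$-th packet of flow $n$ is generated at time $S_{n,i}$, arrives at the queue at time $A_{n,i}$, and is delivered to its destination at time $D_{n,i}$, with $S_{n,i}\le A_{n,i}\le D_{n,i}$ and generation times non-decreasing in $i$. Generation and arrival times are synchronized across flows if there are sequences $\{S_i\}$, $\{A_i\}$ with $S_{n,i}=S_i$, $A_{n,i}=A_i$ for all $n,i$. A policy is work-conserving if the server is busy whenever the queue is non-empty; it is causal if decisions depend only on history and current state. Age of flow $n$: $\Delta_n(t)=t-\max\{S_{n,i}:D_{n,i}\le t\}$; the age vector is $\bm\Delta=(\Delta_1,\ldots,\Delta_N)$, and $\Delta_{[i]}$ denotes its $i$-th largest component. The preemptive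 MAF-LGFS policy serves, among all packets of all flows, the last generated packet from the flow with the maximum age (ties broken arbitrarily), preempting the packet in service when this target changes (preempted packets return to the queue). *)

theory Defs
  imports Complex_Main
begin

text \<open>Sg n i is the generation time, Ag n i the arrival time of packet i of flow n.
A policy's sample path is given by its delivery times D n i (None = never delivered).\<close>

definition synchronized :: "(nat \<Rightarrow> nat \<Rightarrow> real) \<Rightarrow> (nat \<Rightarrow> nat \<Rightarrow> real) \<Rightarrow> bool" where
  "synchronized Sg Ag \<longleftrightarrow> (\<exists>S A. \<forall>n i. Sg n i = S i \<and> Ag n i = A i)"

definition delivered_le :: "(nat \<Rightarrow> nat \<Rightarrow> real option) \<Rightarrow> nat \<Rightarrow> nat \<Rightarrow> real \<Rightarrow> bool" where
  "delivered_le D n i t \<longleftrightarrow> (\<exists>d. D n i = Some d \<and> d \<le> t)"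

definition delivered_lt :: "(nat \<Rightarrow> nat \<Rightarrow> real option) \<Rightarrow> nat \<Rightarrow> nat \<Rightarrow> real \<Rightarrow> bool" where
  "delivered_lt D n i t \<longleftrightarrow> (\<exists>d. D n i = Some d \<and> d < t)"

definition age :: "(nat \<Rightarrow> nat \<Rightarrow> real) \<Rightarrow> (nat \<Rightarrow> nat \<Rightarrow> real option) \<Rightarrow> nat \<Rightarrow> real \<Rightarrow> real" where
  "age Sg D n t = t - Max {Sg n i | i. delivered_le D n i t}"

definition age_before :: "(nat \<Rightarrow> nat \<Rightarrow> real) \<Rightarrow> (nat \<Rightarrow> nat \<Rightarrow> real option) \<Rightarrow> nat \<Rightarrow> real \<Rightarrow> real" where
  "age_before Sg D n t = t - Max {Sg n i | i. delivered_lt D n i t}"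

definition kth_largest :: "nat \<Rightarrow> (nat \<Rightarrow> real) \<Rightarrow> nat \<Rightarrow> real" where
  "kth_largest N v k = rev (sort (map v [0..<N])) ! (k - 1)"

text \<open>Admissible single-server sample path: a delivered packet has arrived and its
(exponential, hence positive) service takes positive time; at most one packet is delivered
at any time (single server).\<close>
definition valid_path :: "nat \<Rightarrow> (nat \<Rightarrow> nat \<Rightarrow> real) \<Rightarrow> (nat \<Rightarrow> nat \<Rightarrow> real option) \<Rightarrow> bool" where
  "valid_path N Ag D \<longleftrightarrow>
     (\<forall>n<N. \<forall>i d. D n i = Some d \<longrightarrow> Ag n i < d) \<and>
     (\<forall>n<N. \<forall>m<N. \<forall>i j d. D n i = Some d \<and> D m j = Some d \<longrightarrow> n = m \<and> i = j)"

definition in_queue_before :: "(nat \<Rightarrow> nat \<Rightarrow> real) \<Rightarrow> (nat \<Rightarrow> nat \<Rightarrow> real option) \<Rightarrow> nat \<Rightarrow> nat \<Rightarrow> real \<Rightarrow> bool" where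
  "in_queue_before Ag D n i t \<longleftrightarrow> Ag n i < t \<and> \<not> delivered_lt D n i t"

text \<open>Preemptive MAF-LGFS: whenever a packet is delivered at time t, it is the packet that
was the service target just before t, i.e. it was in the queue, it belongs to a flow of
maximum age (among flows with packets in the queue), and it is the last generated
packet of that flow in the queue.\<close>
definition maf_lgfs_path :: "nat \<Rightarrow> (nat \<Rightarrow> nat \<Rightarrow> real) \<Rightarrow> (nat \<Rightarrow> nat \<Rightarrow> real) \<Rightarrow> (nat \<Rightarrow> nat \<Rightarrow> real option) \<Rightarrow> bool" where
  "maf_lgfs_path N Sg Ag D \<longleftrightarrow>
     (\<forall>t n i. n < N \<and> D n i = Some t \<longrightarrow>
        in_queue_before Ag D n i t \<and>
        (\<forall>m j. m < N \<and> in_queue_before Ag D m j t \<longrightarrow> age_before Sg D m t \<le> age_before Sg D n t) \<and>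
        (\<forall>j. in_queue_before Ag D n j t \<longrightarrow> Sg n j \<le> Sg n i))"

end

theory Submission
  imports Defs "HOL-Library.Multiset"
begin

definition cnt :: "nat \<Rightarrow> (nat \<Rightarrow> real) \<Rightarrow> real \<Rightarrow> nat" where
  "cnt N v x = card {n. n < N \<and> x \<le> v n}"

lemma cnt_le: "cnt N v x \<le> N"
proof -
  have "{n. n < N \<and> x \<le> v n} \<subseteq> {..<N}" by auto
  then show ?thesis unfolding cnt_def by (metis card_lessThan card_mono finite_lessThan)
qed

lemma cnt_sort: "cnt N v x = card {j. j < N \<and> x \<le> sort (map v [0..<N]) ! j}"
proof -
  have "length (filter (\<lambda>y. x \<le> y) (sort (map v [0..<N])))
        = length (filter (\<lambda>y. x \<le> y) (map v [0..<N]))"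
    by (metis mset_filter mset_sort size_mset)
  moreover have "{n. n < N \<and> x \<le> v n} = {j. j < N \<and> x \<le> map v [0..<N] ! j}"
    by auto
  ultimately show ?thesis unfolding cnt_def
    by (simp add: length_filter_conv_card)
qed

lemma sorted_cnt:
  assumes "sorted ys" "i < length ys"
  shows "x \<le> ys!i \<longleftrightarrow> length ys - i \<le> card {j. j < length ys \<and> x \<le> ys!j}"
proof
  assume h: "x \<le> ys!i"
  have "{i..<length ys} \<subseteq> {j. j < length ys \<and> x \<le> ys!j}"
    using h assms by (auto intro: order_trans[OF _ sorted_nth_mono[of ys i]])
  then show "length ys - i \<le> card {j. j < length ys \<and> x \<le> ys!j}"
  proof -
    have "card {i..<length ys} \<le> card {j. j < length ys \<and> x \<le> ys!j}"
      by (rule card_mono[OF _ \<open>{i..<length ys} \<subseteq> _\<close>]) simp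
    then show ?thesis by simp
  qed
next
  assume h: "length ys - i \<le> card {j. j < length ys \<and> x \<le> ys!j}"
  show "x \<le> ys!i"
  proof (rule ccontr)
    assume "\<not> x \<le> ys!i"
    have "{j. j < length ys \<and> x \<le> ys!j} \<subseteq> {Suc i..<length ys}"
    proof
      fix j assume j: "j \<in> {j. j < length ys \<and> x \<le> ys!j}"
      have "\<not> j \<le> i"
      proof
        assume "j \<le> i"
        then have "ys!j \<le> ys!i" using assms sorted_nth_mono by blast
        then show False using j \<open>\<not> x \<le> ys!i\<close> by auto
      qed
      then show "j \<in> {Suc i..<length ys}" using j by auto
    qed
    then have "card {j. j < length ys \<and> x \<le> ys!j} \<le> card {Suc i..<length ys}"
      by (rule card_mono[rotated]) simp
    then have "card {j. j < length ys \<and> x \<le> ys!j} \<le> length ys - Suc i" by simp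
    then show False using h assms by linarith
  qed
qed

lemma kth_iff:
  assumes "1 \<le> k" "k \<le> N"
  shows "x \<le> kth_largest N v k \<longleftrightarrow> k \<le> cnt N v x"
proof -
  let ?ys = "sort (map v [0..<N])"
  have len: "length ?ys = N" by simp
  have "kth_largest N v k = ?ys ! (N - k)"
    unfolding kth_largest_def using assms by (simp add: rev_nth)
  moreover have "x \<le> ?ys ! (N - k) \<longleftrightarrow> N - (N - k) \<le> card {j. j < N \<and> x \<le> ?ys!j}"
    using sorted_cnt[of ?ys "N - k" x] assms len by simp
  moreover have "N - (N - k) = k" using assms by simp
  ultimately show ?thesis using cnt_sort[of N v x] by (simp only:)
qed

lemma kth_le_iff_cnt:
  "(\<forall>k\<in>{1..N}. kth_largest N u k \<le> kth_largest N w k) \<longleftrightarrow> (\<forall>x. cnt N u x \<le> cnt N w x)"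
proof
  assume H: "\<forall>k\<in>{1..N}. kth_largest N u k \<le> kth_largest N w k"
  show "\<forall>x. cnt N u x \<le> cnt N w x"
  proof
    fix x
    show "cnt N u x \<le> cnt N w x"
    proof (cases "cnt N u x = 0")
      case False
      let ?k = "cnt N u x"
      have k: "1 \<le> ?k" "?k \<le> N" using False cnt_le[of N u x] by auto
      have "x \<le> kth_largest N u ?k" using kth_iff[OF k] by simp
      also have "\<dots> \<le> kth_largest N w ?k" using H k by auto
      finally show ?thesis using kth_iff[OF k, of x w] by simp
    qed simp
  qed
next
  assume H: "\<forall>x. cnt N u x \<le> cnt N w x"
  show "\<forall>k\<in>{1..N}. kth_largest N u k \<le> kth_largest N w k"
  proof
    fix k assume "k \<in> {1..N}"
    then have k: "1 \<le> k" "k \<le> N" by auto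
    have "k \<le> cnt N u (kth_largest N u k)" using kth_iff[OF k, of "kth_largest N u k" u] by simp
    also have "\<dots> \<le> cnt N w (kth_largest N u k)" using H by simp
    finally show "kth_largest N u k \<le> kth_largest N w k" using kth_iff[OF k] by simp
  qed
qed

lemma cnt_step:
  assumes cab: "\<forall>x. cnt N a x \<le> cnt N b x"
    and n0: "n0 < N" and m: "m < N"
    and amax: "\<forall>n<N. a n \<le> a n0"
    and a'n0: "a' n0 = c" and a'o: "\<forall>n<N. n \<noteq> n0 \<longrightarrow> a' n = a n"
    and alow: "\<forall>n<N. c \<le> a n"
    and b'o: "\<forall>n<N. n \<noteq> m \<longrightarrow> b' n = b n"
    and b'low: "\<forall>n<N. c \<le> b' n"
  shows "\<forall>x. cnt N a' x \<le> cnt N b' x"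
proof
  fix x
  show "cnt N a' x \<le> cnt N b' x"
  proof (cases "x \<le> c")
    case True
    have "{n. n < N \<and> x \<le> b' n} = {n. n < N}" using True b'low by force
    then have "cnt N b' x = N" unfolding cnt_def by simp
    then show ?thesis using cnt_le[of N a' x] by simp
  next
    case False
    let ?A = "{n. n < N \<and> x \<le> a n}" and ?B = "{n. n < N \<and> x \<le> b n}"
    let ?A' = "{n. n < N \<and> x \<le> a' n}" and ?B' = "{n. n < N \<and> x \<le> b' n}"
    have fin: "finite ?A" "finite ?B" "finite ?A'" "finite ?B'" by auto
    have "?A' \<subseteq> ?A - {n0}" using False a'n0 a'o by auto
    then have c1: "card ?A' \<le> card (?A - {n0})" by (simp add: card_mono)
    have c2: "card (?A - {n0}) \<le> card ?A - 1"
    proof (cases "n0 \<in> ?A")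
      case True then show ?thesis by (simp add: card_Diff_singleton)
    next
      case nA: False
      then have "?A = {}" using amax n0 by (auto intro: order_trans)
      then show ?thesis by (simp only: card.empty Diff_empty) simp
    qed
    have "?B - {m} \<subseteq> ?B'" using b'o by auto
    then have c3: "card (?B - {m}) \<le> card ?B'" by (simp add: card_mono)
    have c4: "card ?B - 1 \<le> card (?B - {m})" by (simp add: card_Diff_singleton_if)
    have "card ?A \<le> card ?B" using cab unfolding cnt_def by simp
    then show ?thesis unfolding cnt_def using c1 c2 c3 c4 by linarith
  qed
qed


theorem lemma2:
  fixes N :: nat and Sg Ag :: "nat \<Rightarrow> nat \<Rightarrow> real"
    and DP Dpi :: "nat \<Rightarrow> nat \<Rightarrow> real option" and t :: real
  assumes "N \<ge> 1"
    and sync: "synchronized Sg Ag"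
    and gen_mono: "\<forall>n i j. i \<le> j \<longrightarrow> Sg n i \<le> Sg n j"
    and S_le_A: "\<forall>n i. Sg n i \<le> Ag n i"
    and fin_arr: "\<forall>n (s::real). finite {i. Ag n i \<le> s}"
    and validP: "valid_path N Ag DP"
    and validpi: "valid_path N Ag Dpi"
    and P1: "maf_lgfs_path N Sg Ag DP"
    and delP: "\<exists>n<N. \<exists>i. DP n i = Some t"
    and delpi: "\<exists>n<N. \<exists>i. Dpi n i = Some t"
    and initP: "\<forall>n<N. \<exists>i. delivered_lt DP n i t"
    and initpi: "\<forall>n<N. \<exists>i. delivered_lt Dpi n i t"
    and before: "\<forall>k\<in>{1..N}. kth_largest N (\<lambda>n. age_before Sg DP n t) k
                              \<le> kth_largest N (\<lambda>n. age_before Sg Dpi n t) k"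
  shows "\<forall>k\<in>{1..N}. kth_largest N (\<lambda>n. age Sg DP n t) k
                     \<le> kth_largest N (\<lambda>n. age Sg Dpi n t) k"
proof -
  obtain S A where h: "\<forall>n i. Sg n i = S i \<and> Ag n i = A i"
    using sync unfolding synchronized_def by blast
  have SA: "Sg = (\<lambda>n. S)" "Ag = (\<lambda>n. A)" using h by (simp_all add: fun_eq_iff)
  have "{k. A k < t} \<subseteq> {i. Ag 0 i \<le> t}" using h by auto
  moreover have "finite {i. Ag 0 i \<le> t}" using fin_arr by blast
  ultimately have fin: "finite {k. A k < t}" by (rule finite_subset)
  obtain m j where m: "m < N" "Dpi m j = Some t" using delpi by blast
  have Aj: "A j < t" using validpi m SA unfolding valid_path_def by blast
  define L where "L = Max (S ` {k. A k < t})"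
  have L_ge: "\<And>k. A k < t \<Longrightarrow> S k \<le> L" unfolding L_def using fin by simp
  have "L \<in> S ` {k. A k < t}" unfolding L_def using fin Aj by (intro Max_in) auto
  then obtain kL where kL: "A kL < t" "S kL = L" by auto
  have sub: "{S i | i. delivered_le D n i t} \<subseteq> S ` {k. A k < t}"
    if "valid_path N Ag D" "n < N" for D n
    using that SA unfolding valid_path_def delivered_le_def by fastforce
  have ltle: "{S i | i. delivered_lt D n i t} \<subseteq> {S i | i. delivered_le D n i t}" for D n
    unfolding delivered_lt_def delivered_le_def by force
  have finle: "finite {S i | i. delivered_le D n i t}"
    if "valid_path N Ag D" "n < N" for D n
    using sub[OF that] fin by (meson finite_imageI finite_subset)
  have finlt: "finite {S i | i. delivered_lt D n i t}"
    if "valid_path N Ag D" "n < N" for D n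
    using finle[OF that] ltle by (meson finite_subset)
  have bndle: "Max {S i | i. delivered_le D n i t} \<le> L"
    if "valid_path N Ag D" "n < N" "\<exists>i. delivered_lt D n i t" for D n
  proof -
    have ne: "{S i | i. delivered_le D n i t} \<noteq> {}" using that(3) ltle[of D n] by blast
    show ?thesis using finle[OF that(1,2)] ne sub[OF that(1,2)] L_ge
      by (subst Max_le_iff) auto
  qed
  have bndlt: "Max {S i | i. delivered_lt D n i t} \<le> L"
    if "valid_path N Ag D" "n < N" "\<exists>i. delivered_lt D n i t" for D n
  proof -
    have ne: "{S i | i. delivered_lt D n i t} \<noteq> {}" using that(3) by blast
    show ?thesis using finlt[OF that(1,2)] ne ltle[of D n] bndle[OF that] finle[OF that(1,2)]
      by (meson Max_mono order_trans)
  qed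
  have same: "{S i | i. delivered_le D n i t} = {S i | i. delivered_lt D n i t}"
    if "valid_path N Ag D" "n < N" "m' < N" "D m' j' = Some t" "n \<noteq> m'" for D n m' j'
  proof -
    have "delivered_le D n i t \<longleftrightarrow> delivered_lt D n i t" for i
      using that unfolding valid_path_def delivered_le_def delivered_lt_def
      by (metis order_le_less)
    then show ?thesis by simp
  qed
  obtain n0 i0 where n0: "n0 < N" "DP n0 i0 = Some t" using delP by blast
  define a where "a = (\<lambda>n. age_before Sg DP n t)"
  define b where "b = (\<lambda>n. age_before Sg Dpi n t)"
  define a' where "a' = (\<lambda>n. age Sg DP n t)"
  define b' where "b' = (\<lambda>n. age Sg Dpi n t)"
  have cab: "\<forall>x. cnt N a x \<le> cnt N b x"
    using before kth_le_iff_cnt unfolding a_def b_def by blast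
  have b'low: "\<forall>n<N. t - L \<le> b' n"
    using bndle[OF validpi] initpi unfolding b'_def age_def SA by auto
  have b'o: "\<forall>n<N. n \<noteq> m \<longrightarrow> b' n = b n"
    using same[OF validpi _ m] unfolding b'_def b_def age_def age_before_def SA by auto
  have alow: "\<forall>n<N. t - L \<le> a n"
    using bndlt[OF validP] initP unfolding a_def age_before_def SA by auto
  have a'o: "\<forall>n<N. n \<noteq> n0 \<longrightarrow> a' n = a n"
    using same[OF validP _ n0] unfolding a'_def a_def age_def age_before_def SA by auto
  have P1': "\<forall>t n i. n < N \<and> DP n i = Some t \<longrightarrow>
        in_queue_before (\<lambda>n. A) DP n i t \<and>
        (\<forall>m j. m < N \<and> in_queue_before (\<lambda>n. A) DP m j t \<longrightarrow> age_before (\<lambda>n. S) DP m t \<le> age_before (\<lambda>n. S) DP n t) \<and>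
        (\<forall>j. in_queue_before (\<lambda>n. A) DP n j t \<longrightarrow> S j \<le> S i)"
    using P1 unfolding maf_lgfs_path_def SA by blast
  have amax: "\<forall>n<N. a n \<le> a n0"
  proof (intro allI impI)
    fix n assume n: "n < N"
    show "a n \<le> a n0"
    proof (cases "\<exists>j. in_queue_before (\<lambda>n. A) DP n j t")
      case True
      then obtain j' where j': "in_queue_before (\<lambda>n. A) DP n j' t" by blast
      have Q: "in_queue_before (\<lambda>n. A) DP n0 i0 t \<and>
        (\<forall>m j. m < N \<and> in_queue_before (\<lambda>n. A) DP m j t \<longrightarrow> age_before (\<lambda>n. S) DP m t \<le> age_before (\<lambda>n. S) DP n0 t) \<and>
        (\<forall>j. in_queue_before (\<lambda>n. A) DP n0 j t \<longrightarrow> S j \<le> S i0)"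
        using P1' n0 by blast
      then have "age_before (\<lambda>n. S) DP n t \<le> age_before (\<lambda>n. S) DP n0 t"
        using n j' by blast
      then show ?thesis unfolding a_def SA .
    next
      case False
      then have "delivered_lt DP n kL t" using kL unfolding in_queue_before_def by blast
      then have "L \<in> {S i | i. delivered_lt DP n i t}" using kL by auto
      then have "L \<le> Max {S i | i. delivered_lt DP n i t}"
        using finlt[OF validP n] by simp
      then have "a n \<le> t - L" unfolding a_def age_before_def SA by simp
      then show ?thesis using alow n0 by fastforce
    qed
  qed
  have a'n0: "a' n0 = t - L"
  proof -
    have i0: "S i0 \<in> {S i | i. delivered_le DP n0 i t}"
      using n0 unfolding delivered_le_def by auto
    have "L \<le> Max {S i | i. delivered_le DP n0 i t}"
    proof (cases "delivered_lt DP n0 kL t")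
      case True
      then have "L \<in> {S i | i. delivered_le DP n0 i t}" using kL ltle[of DP n0] by auto
      then show ?thesis using finle[OF validP n0(1)] by simp
    next
      case False
      then have "in_queue_before (\<lambda>n. A) DP n0 kL t" using kL unfolding in_queue_before_def by blast
      then have "L \<le> S i0" using P1' n0 kL by metis
      also have "\<dots> \<le> Max {S i | i. delivered_le DP n0 i t}"
        using i0 finle[OF validP n0(1)] by simp
      finally show ?thesis .
    qed
    moreover have "Max {S i | i. delivered_le DP n0 i t} \<le> L"
      using bndle[OF validP n0(1)] initP n0 by blast
    ultimately show ?thesis unfolding a'_def age_def SA by simp
  qed
  have "\<forall>x. cnt N a' x \<le> cnt N b' x"
    by (rule cnt_step[OF cab n0(1) m(1) amax a'n0 a'o alow b'o b'low])
  then show ?thesis using kth_le_iff_cnt unfolding a'_def b'_def by blast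
qed

end
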